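(* Let $F$ be a nonempty $\Omega$-decorated rooted forest. Let $A$ be the set of triples $(\sigma,\tau,\rho)$ where, for some $s\ge r\ge1$, $\sigma:\mathcal V(F)\to\{1,\ldots,s\}$ is a surjection with $u<v\Rightarrow\sigma(u)<\sigma(v)$, $\tau:\{1,\ldots,s\}\to\{1,\ldots,r\}$ is a nondecreasing surjection, and $\rho\in\mathrm{qsh}(\tau)$. Let $B$ be the set of triples $(G,\alpha,\beta)$ where $G$ is a covering subforest of $F$, and for some $r,t\ge1$, $\alpha:\mathcal V(F/G)\to\{1,\ldots,r\}$ is a surjection strictly increasing for the order of $F/G$ (i.e. $x<y\Rightarrow\alpha(x)<\alpha(y)$) and $\beta:\mathcal V(G)\to\{1,\ldots,t\}$ is a surjection strictly increasing for the order of $G$. Then there is a bijection $\Phi:A\to B$ such that, whenever $\Phi(\sigma,\tau,\rho)=(G,\alpha,\beta)$, one has $F^{\tau\circ\sigma}=(F/G)^\alpha$ and $F^{\rho\circ\sigma}=G^\beta$.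
   Context: $\Omega$ is a set with a commutative semigroup law written additively, $[a+b]$ the sum. A rooted forest is a finite directed acyclic graph in which each vertex has at most one incoming edge; its vertex set $\mathcal V(F)$ is partially ordered by $u\le v$ iff there is a directed path from a root to $v$ through $u$. An $\Omega$-decorated forest carries a map $d:\mathcal V(F)\to\Omega$. A covering subforest $G$ of $F$ is a partition of $\mathcal V(F)$ into blocks each inducing a connected subgraph, identified with the decorated forest on $\mathcal V(G)=\mathcal V(F)$ obtained by keeping only edges of $F$ inside blocks; $F/G$ is obtained from $F$ by contracting each block to one vertex decorated by the $\Omega$-sum of the decorations of the block. For a decorated forest $H$ and a surjection $\sigma:\mathcal V(H)\to\{1,\ldots,s\}$, $H^\sigma$ is the word $H^\sigma_1\cdots H^\sigma_s$ with $H^\sigma_j=[\sum_{\sigma(v)=j}d(v)]\in\Omega$. For a nondecreasing surjection $\tau:\{1,\ldots,s\}\to\{1,\ldots,r\}$, $\mathrm{qsh}(\tau)$ is the set of surjections $\rho:\{1,\ldots,s\}\to\{1,\ldots,t\}$ (for some $t\le s$) that are strictly increasing on each block $\tau^{-1}(j)$, $j=1,\ldots,r$. *)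

theory Defs
  imports Main "HOL-Library.FuncSet" "HOL-Library.Disjoint_Sets"
begin

definition rforest :: "'v set \<Rightarrow> ('v \<times> 'v) set \<Rightarrow> bool" where
  "rforest V E \<longleftrightarrow> finite V \<and> E \<subseteq> V \<times> V \<and> (\<forall>v. (v, v) \<notin> E\<^sup>+)
     \<and> (\<forall>u w v. (u, v) \<in> E \<and> (w, v) \<in> E \<longrightarrow> u = w)"

text \<open>Sum in a commutative semigroup over a nonempty finite set.\<close>
definition osum :: "('a \<Rightarrow> 'o::ab_semigroup_add) \<Rightarrow> 'a set \<Rightarrow> 'o" where
  "osum d S = the (Finite_Set.fold
      (\<lambda>x acc. Some (case acc of None \<Rightarrow> d x | Some a \<Rightarrow> d x + a)) None S)"

definition block_connected :: "('v \<times> 'v) set \<Rightarrow> 'v set \<Rightarrow> bool" where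
  "block_connected E Bl \<longleftrightarrow>
     (\<forall>u\<in>Bl. \<forall>v\<in>Bl. (u, v) \<in> ((E \<inter> (Bl \<times> Bl)) \<union> (E \<inter> (Bl \<times> Bl))\<inverse>)\<^sup>*)"

text \<open>Covering subforest, given as the partition of V into its blocks.\<close>
definition covering_subforest :: "'v set \<Rightarrow> ('v \<times> 'v) set \<Rightarrow> 'v set set \<Rightarrow> bool" where
  "covering_subforest V E P \<longleftrightarrow> partition_on V P \<and> (\<forall>Bl\<in>P. block_connected E Bl)"

definition sub_edges :: "('v \<times> 'v) set \<Rightarrow> 'v set set \<Rightarrow> ('v \<times> 'v) set" where
  "sub_edges E P = {(u, v). (u, v) \<in> E \<and> (\<exists>Bl\<in>P. u \<in> Bl \<and> v \<in> Bl)}"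

definition quot_edges :: "('v \<times> 'v) set \<Rightarrow> 'v set set \<Rightarrow> ('v set \<times> 'v set) set" where
  "quot_edges E P = {(B1, B2). B1 \<in> P \<and> B2 \<in> P \<and> B1 \<noteq> B2 \<and>
      (\<exists>u\<in>B1. \<exists>v\<in>B2. (u, v) \<in> E)}"

definition strict_incr :: "'a set \<Rightarrow> ('a \<times> 'a) set \<Rightarrow> ('a \<Rightarrow> nat) \<Rightarrow> bool" where
  "strict_incr X R f \<longleftrightarrow> (\<forall>x\<in>X. \<forall>y\<in>X. (x, y) \<in> R\<^sup>+ \<longrightarrow> f x < f y)"

text \<open>f is a surjection X \<rightarrow> {1..k} (extensional: undefined outside X).\<close>
definition surj_onto :: "'a set \<Rightarrow> ('a \<Rightarrow> nat) \<Rightarrow> nat \<Rightarrow> bool" where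
  "surj_onto X f k \<longleftrightarrow> f \<in> X \<rightarrow>\<^sub>E {1..k} \<and> f ` X = {1..k}"

text \<open>The word H^f = H^f_1 ... H^f_k for a surjection f : X \<rightarrow> {1..k}.\<close>
definition word :: "'a set \<Rightarrow> ('a \<Rightarrow> 'o::ab_semigroup_add) \<Rightarrow> ('a \<Rightarrow> nat) \<Rightarrow> 'o list" where
  "word X d f = map (\<lambda>j. osum d {x \<in> X. f x = j}) [1..<card (f ` X) + 1]"

definition setA :: "'v set \<Rightarrow> ('v \<times> 'v) set \<Rightarrow> (('v \<Rightarrow> nat) \<times> (nat \<Rightarrow> nat) \<times> (nat \<Rightarrow> nat)) set" where
  "setA V E = {(\<sigma>, \<tau>, \<rho>). \<exists>s r t. s \<ge> r \<and> r \<ge> 1 \<and>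
      surj_onto V \<sigma> s \<and> strict_incr V E \<sigma> \<and>
      surj_onto {1..s} \<tau> r \<and> (\<forall>i\<in>{1..s}. \<forall>j\<in>{1..s}. i \<le> j \<longrightarrow> \<tau> i \<le> \<tau> j) \<and>
      t \<le> s \<and> surj_onto {1..s} \<rho> t \<and>
      (\<forall>i\<in>{1..s}. \<forall>j\<in>{1..s}. \<tau> i = \<tau> j \<and> i < j \<longrightarrow> \<rho> i < \<rho> j)}"

definition setB :: "'v set \<Rightarrow> ('v \<times> 'v) set \<Rightarrow> ('v set set \<times> ('v set \<Rightarrow> nat) \<times> ('v \<Rightarrow> nat)) set" where
  "setB V E = {(P, \<alpha>, \<beta>). covering_subforest V E P \<and> (\<exists>r t. r \<ge> 1 \<and> t \<ge> 1 \<and>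
      surj_onto P \<alpha> r \<and> strict_incr P (quot_edges E P) \<alpha> \<and>
      surj_onto V \<beta> t \<and> strict_incr V (sub_edges E P) \<beta>)}"

end

theory Submission
  imports Defs "HOL-Library.Product_Lexorder"
begin


definition ofun :: "('a \<Rightarrow> 'o::ab_semigroup_add) \<Rightarrow> 'a \<Rightarrow> 'o option \<Rightarrow> 'o option" where
  "ofun d = (\<lambda>x acc. Some (case acc of None \<Rightarrow> d x | Some a \<Rightarrow> d x + a))"

lemma ofun_cfc: "comp_fun_commute (ofun d)"
  unfolding comp_fun_commute_def ofun_def
  by (auto simp: fun_eq_iff add.left_commute add.commute split: option.splits)

lemma ofun_ins: "finite A \<Longrightarrow> x \<notin> A \<Longrightarrow> Finite_Set.fold (ofun d) z (insert x A) = ofun d x (Finite_Set.fold (ofun d) z A)"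
proof -
  assume "finite A" "x \<notin> A"
  interpret comp_fun_commute "ofun d" by (rule ofun_cfc)
  show ?thesis using \<open>finite A\<close> \<open>x \<notin> A\<close> by simp
qed

lemma osum_alt: "osum d S = the (Finite_Set.fold (ofun d) None S)"
  unfolding osum_def ofun_def by simp

lemma fold_ne_Some: "finite S \<Longrightarrow> S \<noteq> {} \<Longrightarrow> \<exists>a. Finite_Set.fold (ofun d) None S = Some a"
proof (induction S rule: finite_ne_induct)
  case (singleton x) then show ?case
    using ofun_ins[of "{}" x d None] by (simp add: ofun_def)
next
  case (insert x F) then show ?case
    using ofun_ins[of F x d None] by (simp add: ofun_def)
qed

lemma osum_singleton[simp]: "osum d {x} = d x"
  unfolding osum_alt
  using ofun_ins[of "{}" x d None] by (simp add: ofun_def)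

lemma osum_insert: "finite S \<Longrightarrow> S \<noteq> {} \<Longrightarrow> x \<notin> S \<Longrightarrow> osum d (insert x S) = d x + osum d S"
  unfolding osum_alt
  using ofun_ins[of S x d None] fold_ne_Some[of S d]
  by (auto simp: ofun_def)

lemma osum_union: "finite S \<Longrightarrow> S \<noteq> {} \<Longrightarrow> finite T \<Longrightarrow> T \<noteq> {} \<Longrightarrow> S \<inter> T = {} \<Longrightarrow>
   osum d (S \<union> T) = osum d S + osum d T"
proof (induction S rule: finite_ne_induct)
  case (singleton x) then show ?case by (simp add: osum_insert)
next
  case (insert x F)
  have "insert x F \<union> T = insert x (F \<union> T)" by simp
  then show ?case using insert by (simp add: osum_insert add.assoc)
qed

lemma osum_Union: "finite C \<Longrightarrow> C \<noteq> {} \<Longrightarrow> (\<forall>X\<in>C. finite X \<and> X \<noteq> {}) \<Longrightarrow> disjoint C \<Longrightarrow>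
   osum d (\<Union>C) = osum (osum d) C"
proof (induction C rule: finite_ne_induct)
  case (singleton x) then show ?case by simp
next
  case (insert X C)
  have dj: "X \<inter> \<Union>C = {}" using insert.prems(2) insert.hyps(3)
    by (auto simp: pairwise_def disjnt_def)
  have ne: "\<Union>C \<noteq> {}" using insert by auto
  have "osum d (\<Union>(insert X C)) = osum d X + osum d (\<Union>C)"
    using osum_union[of X "\<Union>C" d] insert dj ne by auto
  also have "\<dots> = osum d X + osum (osum d) C"
    using insert by (simp add: pairwise_insert)
  finally show ?case using insert by (simp add: osum_insert)
qed


definition RR :: "('v \<times> 'v) set \<Rightarrow> ('v \<Rightarrow> nat) \<Rightarrow> ('v \<times> 'v) set" where
  "RR E f = {(u,w). (u,w) \<in> E \<and> f u = f w}"

abbreviation QQ :: "('v \<times> 'v) set \<Rightarrow> ('v \<Rightarrow> nat) \<Rightarrow> ('v \<times> 'v) set" where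
  "QQ E f \<equiv> (RR E f \<union> (RR E f)\<inverse>)\<^sup>*"

definition comps :: "'v set \<Rightarrow> ('v \<times> 'v) set \<Rightarrow> ('v \<Rightarrow> nat) \<Rightarrow> 'v set set" where
  "comps V E f = V // (QQ E f \<inter> V \<times> V)"

lemma QQ_f: "(u,w) \<in> QQ E f \<Longrightarrow> f u = f w"
  by (induction rule: rtrancl_induct) (auto simp: RR_def)

lemma QQ_V: "(u,w) \<in> QQ E f \<Longrightarrow> E \<subseteq> V \<times> V \<Longrightarrow> u \<in> V \<Longrightarrow> w \<in> V"
  by (induction rule: rtrancl_induct) (auto simp: RR_def)

lemma QQ_sym: "(u,w) \<in> QQ E f \<Longrightarrow> (w,u) \<in> QQ E f"
proof -
  have "sym (RR E f \<union> (RR E f)\<inverse>)" by (auto simp: sym_def)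
  then have "sym (QQ E f)" by (rule sym_rtrancl)
  then show "(u,w) \<in> QQ E f \<Longrightarrow> (w,u) \<in> QQ E f" by (auto simp: sym_def)
qed

lemma equiv_QQ: "equiv V (QQ E f \<inter> V \<times> V)"
  unfolding equiv_def refl_on_def sym_def trans_def
  by (auto intro: QQ_sym rtrancl_trans)

lemma part_comps: "partition_on V (comps V E f)"
  unfolding comps_def by (rule partition_on_quotient[OF equiv_QQ])

lemma comps_elem: "X \<in> comps V E f \<Longrightarrow> E \<subseteq> V \<times> V \<Longrightarrow> u \<in> X \<Longrightarrow> u \<in> V \<and> X = QQ E f `` {u} \<and> (\<forall>w\<in>X. f w = f u)"
proof -
  assume X: "X \<in> comps V E f" and EV: "E \<subseteq> V \<times> V" and u: "u \<in> X"
  from X obtain v where v: "v \<in> V" "X = (QQ E f \<inter> V \<times> V) `` {v}"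
    unfolding comps_def quotient_def by auto
  have uv: "(v,u) \<in> QQ E f" "u \<in> V" using u v by auto
  have "X = QQ E f `` {u}"
  proof
    show "X \<subseteq> QQ E f `` {u}" using v uv by (auto intro: QQ_sym rtrancl_trans)
    show "QQ E f `` {u} \<subseteq> X" using v uv
      by (auto intro: rtrancl_trans QQ_V[OF _ EV])
  qed
  moreover have "\<forall>w\<in>X. f w = f u" using v uv QQ_f[of v u E f] QQ_f[of v _ E f] by (metis Int_iff Image_singleton_iff)
  ultimately show ?thesis using uv by blast
qed

lemma comps_closed: "X \<in> comps V E f \<Longrightarrow> E \<subseteq> V \<times> V \<Longrightarrow> a \<in> X \<Longrightarrow> (a,b) \<in> QQ E f \<Longrightarrow> b \<in> X"
  using comps_elem[of X V E f a] by auto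

lemma comps_conn: "X \<in> comps V E f \<Longrightarrow> E \<subseteq> V \<times> V \<Longrightarrow> block_connected E X"
  unfolding block_connected_def
proof (intro ballI)
  fix u w assume X: "X \<in> comps V E f" and EV: "E \<subseteq> V \<times> V" and u: "u \<in> X" and w: "w \<in> X"
  have uw: "(u,w) \<in> QQ E f" using comps_elem[OF X EV u] w by auto
  have "(u,w) \<in> ((E \<inter> X \<times> X) \<union> (E \<inter> X \<times> X)\<inverse>)\<^sup>*" using uw
  proof (induction rule: rtrancl_induct)
    case base then show ?case by simp
  next
    case (step y z)
    have y: "y \<in> X" using comps_closed[OF X EV u step(1)] .
    have z: "z \<in> X" using comps_closed[OF X EV u] step(1,2) by (meson rtrancl.rtrancl_into_rtrancl)
    have "(y,z) \<in> (E \<inter> X \<times> X) \<union> (E \<inter> X \<times> X)\<inverse>" using step(2) y z by (auto simp: RR_def)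
    then show ?case using step(3) by (meson rtrancl.rtrancl_into_rtrancl)
  qed
  then show "(u, w) \<in> (E \<inter> X \<times> X \<union> (E \<inter> X \<times> X)\<inverse>)\<^sup>*" by simp
qed

lemma comps_cong: "E \<subseteq> V \<times> V \<Longrightarrow> (\<And>v. v \<in> V \<Longrightarrow> f v = g v) \<Longrightarrow> comps V E f = comps V E g"
proof -
  assume EV: "E \<subseteq> V \<times> V" and fg: "\<And>v. v \<in> V \<Longrightarrow> f v = g v"
  have "RR E f = RR E g" using EV fg unfolding RR_def by auto
  then show ?thesis unfolding comps_def by simp
qed

definition idx :: "'a list \<Rightarrow> 'a \<Rightarrow> nat" where
  "idx L x = (THE i. i < length L \<and> L ! i = x)"

lemma idx_nth: "distinct L \<Longrightarrow> i < length L \<Longrightarrow> idx L (L ! i) = i"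
  unfolding idx_def by (rule the_equality) (auto simp: nth_eq_iff_index_eq)

lemma idx_in: "distinct L \<Longrightarrow> x \<in> set L \<Longrightarrow> idx L x < length L \<and> L ! (idx L x) = x"
  by (metis idx_nth in_set_conv_nth)

lemma idx_mono: "sorted_wrt (<) (L :: ('b::linorder) list) \<Longrightarrow> x \<in> set L \<Longrightarrow> y \<in> set L \<Longrightarrow> x < y \<Longrightarrow> idx L x < idx L y"
proof -
  assume s: "sorted_wrt (<) L" and x: "x \<in> set L" and y: "y \<in> set L" and xy: "x < y"
  have d: "distinct L" using s by (simp add: strict_sorted_iff)
  note ix = idx_in[OF d x] and iy = idx_in[OF d y]
  show ?thesis
  proof (rule ccontr)
    assume "\<not> idx L x < idx L y"
    then have "idx L y \<le> idx L x" by simp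
    then have "L ! idx L y \<le> L ! idx L x" using s ix iy
      by (metis le_less sorted_wrt_nth_less order.strict_implies_order)
    then show False using ix iy xy by simp
  qed
qed



definition PhiF :: "'v set \<Rightarrow> ('v \<times> 'v) set \<Rightarrow> (('v \<Rightarrow> nat) \<times> (nat \<Rightarrow> nat) \<times> (nat \<Rightarrow> nat))
    \<Rightarrow> ('v set set \<times> ('v set \<Rightarrow> nat) \<times> ('v \<Rightarrow> nat))" where
  "PhiF V E x = (case x of (\<sigma>, \<tau>, \<rho>) \<Rightarrow>
     (comps V E (\<tau> \<circ> \<sigma>), restrict (\<lambda>B. \<tau> (\<sigma> (SOME v. v \<in> B))) (comps V E (\<tau> \<circ> \<sigma>)),
      restrict (\<rho> \<circ> \<sigma>) V))"

lemma trancl_mono_fun: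
  assumes "(x,y) \<in> R\<^sup>+" and "\<And>a b. (a,b) \<in> R \<Longrightarrow> h a < (h b :: 'b::order)"
  shows "h x < h y"
  using assms(1) by (induction rule: trancl_induct) (auto dest: assms(2) intro: less_trans)

lemma setA_D:
  assumes "(\<sigma>,\<tau>,\<rho>) \<in> setA V E"
  obtains s r t where "s \<ge> r" "r \<ge> 1" "surj_onto V \<sigma> s" "strict_incr V E \<sigma>"
      "surj_onto {1..s} \<tau> r" "\<forall>i\<in>{1..s}. \<forall>j\<in>{1..s}. i \<le> j \<longrightarrow> \<tau> i \<le> \<tau> j"
      "t \<le> s" "surj_onto {1..s} \<rho> t"
      "\<forall>i\<in>{1..s}. \<forall>j\<in>{1..s}. \<tau> i = \<tau> j \<and> i < j \<longrightarrow> \<rho> i < \<rho> j"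
  using assms unfolding setA_def by blast

lemma PhiF_B:
  assumes EV: "E \<subseteq> V \<times> V" and a: "(\<sigma>,\<tau>,\<rho>) \<in> setA V E"
  shows "PhiF V E (\<sigma>,\<tau>,\<rho>) \<in> setB V E"
proof -
  obtain s r t where sr: "s \<ge> r" "r \<ge> 1" and sig: "surj_onto V \<sigma> s" and si: "strict_incr V E \<sigma>"
     and tau: "surj_onto {1..s} \<tau> r" and tm: "\<forall>i\<in>{1..s}. \<forall>j\<in>{1..s}. i \<le> j \<longrightarrow> \<tau> i \<le> \<tau> j"
     and ts: "t \<le> s" and rho: "surj_onto {1..s} \<rho> t"
     and qs: "\<forall>i\<in>{1..s}. \<forall>j\<in>{1..s}. \<tau> i = \<tau> j \<and> i < j \<longrightarrow> \<rho> i < \<rho> j"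
    by (rule setA_D[OF a])
  define f where "f = \<tau> \<circ> \<sigma>"
  define P where "P = comps V E f"
  define \<alpha> where "\<alpha> = restrict (\<lambda>B. \<tau> (\<sigma> (SOME v. v \<in> B))) P"
  have Phi: "PhiF V E (\<sigma>,\<tau>,\<rho>) = (P, \<alpha>, restrict (\<rho> \<circ> \<sigma>) V)"
    unfolding PhiF_def P_def \<alpha>_def f_def by simp
  have sV: "\<And>v. v \<in> V \<Longrightarrow> \<sigma> v \<in> {1..s}" using sig unfolding surj_onto_def by auto
  have sV': "\<sigma> ` V = {1..s}" using sig unfolding surj_onto_def by auto
  have edge: "\<sigma> u < \<sigma> w \<and> u \<in> V \<and> w \<in> V" if uw: "(u,w) \<in> E" for u w
  proof -
    have V: "u \<in> V" "w \<in> V" using uw EV by auto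
    have "(u,w) \<in> E\<^sup>+" using uw by (rule r_into_trancl)
    then have "\<sigma> u < \<sigma> w" using si V unfolding strict_incr_def by blast
    then show ?thesis using V by simp
  qed
  have edgef: "f u \<le> f w" if uw: "(u,w) \<in> E" for u w
  proof -
    have "\<sigma> u \<in> {1..s}" "\<sigma> w \<in> {1..s}" "\<sigma> u \<le> \<sigma> w" using edge[OF uw] sV by auto
    then show ?thesis using tm unfolding f_def by simp
  qed
  have edgeq: "\<rho> (\<sigma> u) < \<rho> (\<sigma> w)" if uw: "(u,w) \<in> E" and eq: "f u = f w" for u w
  proof -
    have "\<sigma> u \<in> {1..s}" "\<sigma> w \<in> {1..s}" "\<sigma> u < \<sigma> w" "\<tau> (\<sigma> u) = \<tau> (\<sigma> w)"
      using edge[OF uw] sV eq by (auto simp: f_def)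
    then show ?thesis using qs by blast
  qed
  have s1: "s \<ge> 1" using sr by simp
  have t1: "t \<ge> 1"
  proof -
    have "\<rho> 1 \<in> {1..t}" using rho s1 unfolding surj_onto_def by auto
    then show ?thesis by simp
  qed
  have part: "partition_on V P" unfolding P_def by (rule part_comps)
  have cov: "covering_subforest V E P"
    unfolding covering_subforest_def using part comps_conn[OF _ EV] P_def by blast
  have alphaB: "\<And>B u. B \<in> P \<Longrightarrow> u \<in> B \<Longrightarrow> \<alpha> B = f u"
  proof -
    fix B u assume B: "B \<in> P" and u: "u \<in> B"
    have "(SOME v. v \<in> B) \<in> B" using u by (rule someI)
    moreover have "\<forall>w\<in>B. f w = f u" using comps_elem[OF B[unfolded P_def] EV u] by blast
    ultimately have "f (SOME v. v \<in> B) = f u" by blast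
    then show "\<alpha> B = f u" using B unfolding \<alpha>_def f_def by simp
  qed
  have Pne: "\<And>B. B \<in> P \<Longrightarrow> \<exists>u. u \<in> B" using partition_onD3[OF part] by (metis equals0I)
  have PV: "\<And>B. B \<in> P \<Longrightarrow> B \<subseteq> V" using part unfolding partition_on_def by blast
  have img: "\<alpha> ` P = f ` V"
  proof
    show "\<alpha> ` P \<subseteq> f ` V" using alphaB Pne PV by blast
    show "f ` V \<subseteq> \<alpha> ` P"
    proof
      fix x assume "x \<in> f ` V"
      then obtain v where v: "v \<in> V" "x = f v" by auto
      then obtain B where "B \<in> P" "v \<in> B" using part unfolding partition_on_def by blast
      then show "x \<in> \<alpha> ` P" using alphaB v by (metis image_eqI)
    qed
  qed
  have fV: "f ` V = {1..r}"
  proof -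
    have "f ` V = \<tau> ` \<sigma> ` V" unfolding f_def by (simp add: image_comp)
    then show ?thesis using sV' tau by (simp add: surj_onto_def)
  qed
  have asurj: "surj_onto P \<alpha> r"
    unfolding surj_onto_def using img fV by (auto simp: \<alpha>_def)
  have ainc: "strict_incr P (quot_edges E P) \<alpha>"
    unfolding strict_incr_def
  proof (intro ballI impI)
    fix B1 B2 assume "(B1,B2) \<in> (quot_edges E P)\<^sup>+"
    then show "\<alpha> B1 < \<alpha> B2"
    proof (rule trancl_mono_fun)
      fix X Y assume "(X,Y) \<in> quot_edges E P"
      then obtain u w where X: "X \<in> P" and Y: "Y \<in> P" "X \<noteq> Y" and uw: "u \<in> X" "w \<in> Y" "(u,w) \<in> E"
        unfolding quot_edges_def by auto
      have "f u \<noteq> f w"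
      proof
        assume "f u = f w"
        then have "(u,w) \<in> QQ E f" using uw by (auto simp: RR_def)
        then have "w \<in> X" using comps_closed[OF X[unfolded P_def] EV uw(1)] by simp
        have "X = QQ E f `` {w}" using comps_elem[OF X[unfolded P_def] EV \<open>w \<in> X\<close>] by blast
        moreover have "Y = QQ E f `` {w}" using comps_elem[OF Y(1)[unfolded P_def] EV uw(2)] by blast
        ultimately have "X = Y" by simp
        then show False using Y by simp
      qed
      then have "f u < f w" using edgef[OF uw(3)] by simp
      then show "\<alpha> X < \<alpha> Y" using alphaB X Y uw by simp
    qed
  qed
  have bsurj: "surj_onto V (restrict (\<rho> \<circ> \<sigma>) V) t"
  proof -
    have i: "restrict (\<rho> \<circ> \<sigma>) V ` V = \<rho> ` \<sigma> ` V" by (simp add: image_comp)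
    have "\<rho> ` \<sigma> ` V = {1..t}" using sV' rho by (simp add: surj_onto_def)
    then show ?thesis unfolding surj_onto_def using i by auto
  qed
  have binc: "strict_incr V (sub_edges E P) (restrict (\<rho> \<circ> \<sigma>) V)"
    unfolding strict_incr_def
  proof (intro ballI impI)
    fix u w assume "u \<in> V" "w \<in> V" "(u,w) \<in> (sub_edges E P)\<^sup>+"
    have "(\<rho> \<circ> \<sigma>) u < (\<rho> \<circ> \<sigma>) w" using \<open>(u,w) \<in> (sub_edges E P)\<^sup>+\<close>
    proof (rule trancl_mono_fun)
      fix x y assume "(x,y) \<in> sub_edges E P"
      then obtain B where xy: "(x,y) \<in> E" "B \<in> P" "x \<in> B" "y \<in> B" unfolding sub_edges_def by auto
      have "f x = f y" using alphaB[OF xy(2) xy(3)] alphaB[OF xy(2) xy(4)] by simp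
      then show "(\<rho> \<circ> \<sigma>) x < (\<rho> \<circ> \<sigma>) y" using edgeq xy by simp
    qed
    then show "restrict (\<rho> \<circ> \<sigma>) V u < restrict (\<rho> \<circ> \<sigma>) V w" using \<open>u \<in> V\<close> \<open>w \<in> V\<close> by simp
  qed
  show ?thesis unfolding Phi setB_def using cov sr t1 asurj ainc bsurj binc by blast
qed



definition gof :: "'v set set \<Rightarrow> ('v set \<Rightarrow> nat) \<Rightarrow> 'v \<Rightarrow> nat" where
  "gof P \<alpha> v = \<alpha> (THE B. B \<in> P \<and> v \<in> B)"

definition pof :: "'v set set \<Rightarrow> ('v set \<Rightarrow> nat) \<Rightarrow> ('v \<Rightarrow> nat) \<Rightarrow> 'v \<Rightarrow> nat \<times> nat" where
  "pof P \<alpha> \<beta> v = (gof P \<alpha> v, \<beta> v)"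

definition PsiF :: "'v set \<Rightarrow> ('v set set \<times> ('v set \<Rightarrow> nat) \<times> ('v \<Rightarrow> nat))
    \<Rightarrow> (('v \<Rightarrow> nat) \<times> (nat \<Rightarrow> nat) \<times> (nat \<Rightarrow> nat))" where
  "PsiF V x = (case x of (P, \<alpha>, \<beta>) \<Rightarrow>
     let L = sorted_list_of_set (pof P \<alpha> \<beta> ` V) in
     (restrict (\<lambda>v. idx L (pof P \<alpha> \<beta> v) + 1) V,
      restrict (\<lambda>i. fst (L ! (i - 1))) {1..length L},
      restrict (\<lambda>i. snd (L ! (i - 1))) {1..length L}))"

lemma the_block: "partition_on V P \<Longrightarrow> B \<in> P \<Longrightarrow> v \<in> B \<Longrightarrow> (THE B'. B' \<in> P \<and> v \<in> B') = B"
  by (rule the_equality) (auto simp: partition_on_def pairwise_def disjnt_def)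

lemma word_restrict: "word X d (restrict f X) = word X d f"
proof -
  have "restrict f X ` X = f ` X" by auto
  moreover have "\<And>j. {x \<in> X. restrict f X x = j} = {x \<in> X. f x = j}" by auto
  ultimately show ?thesis unfolding word_def by simp
qed

lemma surj_restrict: "surj_onto X f k \<Longrightarrow> restrict f X = f"
  unfolding surj_onto_def by (simp add: PiE_iff extensional_restrict)

lemma PhiF_facts:
  assumes EV: "E \<subseteq> V \<times> V" and a: "(\<sigma>,\<tau>,\<rho>) \<in> setA V E"
    and Phi: "PhiF V E (\<sigma>,\<tau>,\<rho>) = (P, \<alpha>, \<beta>)"
  shows "P = comps V E (\<tau> \<circ> \<sigma>)" "\<beta> = restrict (\<rho> \<circ> \<sigma>) V" "partition_on V P"
    "\<And>B u. B \<in> P \<Longrightarrow> u \<in> B \<Longrightarrow> \<alpha> B = \<tau> (\<sigma> u)"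
proof -
  have P: "P = comps V E (\<tau> \<circ> \<sigma>)" and b: "\<beta> = restrict (\<rho> \<circ> \<sigma>) V"
    and al: "\<alpha> = restrict (\<lambda>B. \<tau> (\<sigma> (SOME v. v \<in> B))) (comps V E (\<tau> \<circ> \<sigma>))"
    using Phi unfolding PhiF_def by auto
  show "P = comps V E (\<tau> \<circ> \<sigma>)" by (rule P)
  show "\<beta> = restrict (\<rho> \<circ> \<sigma>) V" by (rule b)
  show "partition_on V P" unfolding P by (rule part_comps)
  fix B u assume B: "B \<in> P" and u: "u \<in> B"
  have "(SOME v. v \<in> B) \<in> B" using u by (rule someI)
  moreover have "\<forall>w\<in>B. (\<tau> \<circ> \<sigma>) w = (\<tau> \<circ> \<sigma>) u" using comps_elem[OF B[unfolded P] EV u] by blast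
  ultimately have "\<tau> (\<sigma> (SOME v. v \<in> B)) = \<tau> (\<sigma> u)" by auto
  then show "\<alpha> B = \<tau> (\<sigma> u)" using B unfolding al P by simp
qed

lemma PhiF_words:
  assumes EV: "E \<subseteq> V \<times> V" and fin: "finite V" and a: "(\<sigma>,\<tau>,\<rho>) \<in> setA V E"
    and Phi: "PhiF V E (\<sigma>,\<tau>,\<rho>) = (P, \<alpha>, \<beta>)"
  shows "word V d (\<tau> \<circ> \<sigma>) = word P (osum d) \<alpha> \<and> word V d (\<rho> \<circ> \<sigma>) = word V d \<beta>"
proof
  note F = PhiF_facts[OF EV a Phi]
  show "word V d (\<rho> \<circ> \<sigma>) = word V d \<beta>" using F(2) word_restrict by metis
  obtain s r t where sig: "surj_onto V \<sigma> s" and tau: "surj_onto {1..s} \<tau> r"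
    using setA_D[OF a] by metis
  define f where "f = \<tau> \<circ> \<sigma>"
  have aB: "\<And>B u. B \<in> P \<Longrightarrow> u \<in> B \<Longrightarrow> \<alpha> B = f u" using F(4) f_def by simp
  have part: "partition_on V P" by (rule F(3))
  have Pne: "\<And>B. B \<in> P \<Longrightarrow> \<exists>u. u \<in> B" using partition_onD3[OF part] by (metis equals0I)
  have PV: "\<And>B. B \<in> P \<Longrightarrow> B \<subseteq> V" using part unfolding partition_on_def by blast
  have inB: "\<And>v. v \<in> V \<Longrightarrow> \<exists>B\<in>P. v \<in> B" using part unfolding partition_on_def by blast
  have img: "\<alpha> ` P = f ` V"
  proof
    show "\<alpha> ` P \<subseteq> f ` V" using aB Pne PV by blast
    show "f ` V \<subseteq> \<alpha> ` P"
    proof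
      fix x assume "x \<in> f ` V"
      then obtain v where v: "v \<in> V" "x = f v" by auto
      then obtain B where "B \<in> P" "v \<in> B" using inB by blast
      then show "x \<in> \<alpha> ` P" using aB v by (metis image_eqI)
    qed
  qed
  have fV: "f ` V = {1..r}"
  proof -
    have "f ` V = \<tau> ` \<sigma> ` V" unfolding f_def by (simp add: image_comp)
    then show ?thesis using sig tau by (simp add: surj_onto_def)
  qed
  have finP: "finite P" using finite_elements[OF fin part] .
  have blk: "osum d {x \<in> V. f x = j} = osum (osum d) {B \<in> P. \<alpha> B = j}" if j: "j \<in> {1..r}" for j
  proof -
    define C where "C = {B \<in> P. \<alpha> B = j}"
    have U: "\<Union>C = {x \<in> V. f x = j}"
    proof
      show "\<Union>C \<subseteq> {x \<in> V. f x = j}" unfolding C_def using aB PV by fastforce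
      show "{x \<in> V. f x = j} \<subseteq> \<Union>C"
      proof
        fix x assume "x \<in> {x \<in> V. f x = j}"
        then obtain B where "B \<in> P" "x \<in> B" "f x = j" using inB by blast
        then show "x \<in> \<Union>C" unfolding C_def using aB by blast
      qed
    qed
    have "finite C" unfolding C_def using finP by simp
    moreover have "C \<noteq> {}"
    proof -
      have "j \<in> \<alpha> ` P" using j img fV by simp
      then show ?thesis unfolding C_def by blast
    qed
    moreover have "\<forall>X\<in>C. finite X \<and> X \<noteq> {}" unfolding C_def
      using PV fin Pne finite_subset by blast
    moreover have "disjoint C" unfolding C_def
      using partition_onD2[OF part] by (rule pairwise_subset) auto
    ultimately have "osum d (\<Union>C) = osum (osum d) C" by (rule osum_Union)
    then show ?thesis using U C_def by simp
  qed
  have "card (\<alpha> ` P) = card (f ` V)" using img by simp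
  moreover have "set [1..<card (f ` V) + 1] = {1..r}" using fV by auto
  ultimately show "word V d (\<tau> \<circ> \<sigma>) = word P (osum d) \<alpha>"
    unfolding word_def f_def[symmetric] using blk by (auto intro: map_cong)
qed



lemma PsiPhi:
  assumes EV: "E \<subseteq> V \<times> V" and a: "(\<sigma>,\<tau>,\<rho>) \<in> setA V E"
  shows "PsiF V (PhiF V E (\<sigma>,\<tau>,\<rho>)) = (\<sigma>,\<tau>,\<rho>)"
proof -
  obtain P \<alpha> \<beta> where Phi: "PhiF V E (\<sigma>,\<tau>,\<rho>) = (P, \<alpha>, \<beta>)" by (metis prod_cases3)
  note F = PhiF_facts[OF EV a Phi]
  obtain s r t where "s \<ge> r" "r \<ge> 1" and sig: "surj_onto V \<sigma> s" and "strict_incr V E \<sigma>"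
     and tau: "surj_onto {1..s} \<tau> r" and tm: "\<forall>i\<in>{1..s}. \<forall>j\<in>{1..s}. i \<le> j \<longrightarrow> \<tau> i \<le> \<tau> j"
     and "t \<le> s" and rho: "surj_onto {1..s} \<rho> t"
     and qs: "\<forall>i\<in>{1..s}. \<forall>j\<in>{1..s}. \<tau> i = \<tau> j \<and> i < j \<longrightarrow> \<rho> i < \<rho> j"
    by (rule setA_D[OF a])
  define h where "h = (\<lambda>i. (\<tau> i, \<rho> i))"
  have sV: "\<And>v. v \<in> V \<Longrightarrow> \<sigma> v \<in> {1..s}" using sig unfolding surj_onto_def by auto
  have sV': "\<sigma> ` V = {1..s}" using sig unfolding surj_onto_def by auto
  have pofv: "pof P \<alpha> \<beta> v = h (\<sigma> v)" if v: "v \<in> V" for v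
  proof -
    obtain B where B: "B \<in> P" "v \<in> B" using F(3) v unfolding partition_on_def by blast
    have "gof P \<alpha> v = \<tau> (\<sigma> v)" unfolding gof_def the_block[OF F(3) B] using F(4)[OF B] .
    then show ?thesis unfolding pof_def h_def F(2) using v by simp
  qed
  have hmono: "h i < h j" if "i \<in> {1..s}" "j \<in> {1..s}" "i < j" for i j
  proof -
    have "\<tau> i \<le> \<tau> j" using tm that by simp
    moreover have "\<tau> i = \<tau> j \<Longrightarrow> \<rho> i < \<rho> j" using qs that by blast
    ultimately show ?thesis unfolding h_def by (cases "\<tau> i = \<tau> j") simp_all
  qed
  define xs where "xs = map h [1..<s+1]"
  have lxs: "length xs = s" unfolding xs_def by simp
  have nxs: "xs ! (i - 1) = h i" if "i \<in> {1..s}" for i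
  proof -
    have i: "i - 1 < s" "1 \<le> i" using that by auto
    have "[1..<s+1] ! (i - 1) = i" using i by (subst nth_upt) auto
    then show ?thesis unfolding xs_def using i by (subst nth_map) auto
  qed
  have sxs: "sorted_wrt (<) xs"
    unfolding sorted_wrt_iff_nth_less lxs
  proof (intro allI impI)
    fix i j assume "i < j" "j < s"
    then have "xs ! ((i+1) - 1) < xs ! ((j+1) - 1)" using nxs[of "i+1"] nxs[of "j+1"] hmono[of "i+1" "j+1"] by simp
    then show "xs ! i < xs ! j" by simp
  qed
  have setxs: "set xs = pof P \<alpha> \<beta> ` V"
  proof -
    have "set xs = h ` {1..s}" unfolding xs_def by (auto simp: atLeastLessThanSuc_atLeastAtMost)
    also have "\<dots> = h ` \<sigma> ` V" using sV' by simp
    also have "\<dots> = (\<lambda>v. h (\<sigma> v)) ` V" by (simp add: image_image)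
    also have "\<dots> = pof P \<alpha> \<beta> ` V" by (rule image_cong) (simp_all add: pofv)
    finally show ?thesis .
  qed
  have fin: "finite (pof P \<alpha> \<beta> ` V)" using setxs[symmetric] by simp
  have L: "sorted_list_of_set (pof P \<alpha> \<beta> ` V) = xs"
  proof -
    have dxs: "distinct xs" using sxs by (simp add: strict_sorted_iff)
    have "length xs = card (pof P \<alpha> \<beta> ` V)" using distinct_card[OF dxs] setxs by simp
    then show ?thesis using sorted_list_of_set_unique[OF fin, of xs] sxs setxs by blast
  qed
  have dxs: "distinct xs" using sxs by (simp add: strict_sorted_iff)
  have s1: "restrict (\<lambda>v. idx xs (pof P \<alpha> \<beta> v) + 1) V = \<sigma>"
  proof -
    have "restrict (\<lambda>v. idx xs (pof P \<alpha> \<beta> v) + 1) V = restrict \<sigma> V"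
    proof (rule restrict_ext)
      fix v assume v: "v \<in> V"
      have "pof P \<alpha> \<beta> v = xs ! (\<sigma> v - 1)" using pofv[OF v] nxs[OF sV[OF v]] by simp
      moreover have "\<sigma> v - 1 < length xs" using sV[OF v] lxs by auto
      ultimately have "idx xs (pof P \<alpha> \<beta> v) = \<sigma> v - 1" using idx_nth[OF dxs] by simp
      then show "idx xs (pof P \<alpha> \<beta> v) + 1 = \<sigma> v" using sV[OF v] by simp
    qed
    then show ?thesis using surj_restrict[OF sig] by simp
  qed
  have t1: "restrict (\<lambda>i. fst (xs ! (i - 1))) {1..length xs} = \<tau>"
  proof -
    have "restrict (\<lambda>i. fst (xs ! (i - 1))) {1..length xs} = restrict \<tau> {1..s}"
      unfolding lxs
    proof (intro restrict_ext)
      fix i assume "i \<in> {1..s}"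
      then show "fst (xs ! (i - 1)) = \<tau> i" using nxs[OF \<open>i \<in> {1..s}\<close>] by (simp add: h_def)
    qed
    then show ?thesis using surj_restrict[OF tau] lxs by simp
  qed
  have r1: "restrict (\<lambda>i. snd (xs ! (i - 1))) {1..length xs} = \<rho>"
  proof -
    have "restrict (\<lambda>i. snd (xs ! (i - 1))) {1..length xs} = restrict \<rho> {1..s}"
      unfolding lxs
    proof (intro restrict_ext)
      fix i assume "i \<in> {1..s}"
      then show "snd (xs ! (i - 1)) = \<rho> i" using nxs[OF \<open>i \<in> {1..s}\<close>] by (simp add: h_def)
    qed
    then show ?thesis using surj_restrict[OF rho] lxs by simp
  qed
  show ?thesis unfolding Phi PsiF_def prod.case Let_def L using s1 t1 r1 by simp
qed



lemma setB_D:
  assumes "(P,\<alpha>,\<beta>) \<in> setB V E"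
  obtains r t where "covering_subforest V E P" "r \<ge> 1" "t \<ge> 1"
      "surj_onto P \<alpha> r" "strict_incr P (quot_edges E P) \<alpha>"
      "surj_onto V \<beta> t" "strict_incr V (sub_edges E P) \<beta>"
  using assms unfolding setB_def by blast

lemma imgL: "(\<lambda>i. L ! (i - 1)) ` {1..length L} = set L"
proof
  show "(\<lambda>i. L ! (i - 1)) ` {1..length L} \<subseteq> set L" by auto
  show "set L \<subseteq> (\<lambda>i. L ! (i - 1)) ` {1..length L}"
  proof
    fix x assume "x \<in> set L"
    then obtain k where k: "k < length L" "L ! k = x" by (auto simp: in_set_conv_nth)
    then have "Suc k \<in> {1..length L}" "L ! (Suc k - 1) = x" by auto
    then show "x \<in> (\<lambda>i. L ! (i - 1)) ` {1..length L}" by (metis image_eqI)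
  qed
qed

lemma PsiF_props:
  assumes EV: "E \<subseteq> V \<times> V" and fin: "finite V" and b: "(P,\<alpha>,\<beta>) \<in> setB V E"
  shows "PsiF V (P,\<alpha>,\<beta>) \<in> setA V E \<and> PhiF V E (PsiF V (P,\<alpha>,\<beta>)) = (P,\<alpha>,\<beta>)"
proof -
  obtain r t where cov: "covering_subforest V E P" and r1: "r \<ge> 1" and t1: "t \<ge> 1"
      and asurj: "surj_onto P \<alpha> r" and ainc: "strict_incr P (quot_edges E P) \<alpha>"
      and bsurj: "surj_onto V \<beta> t" and binc: "strict_incr V (sub_edges E P) \<beta>"
    by (rule setB_D[OF b])
  have part: "partition_on V P" using cov unfolding covering_subforest_def by simp
  have conn: "\<And>B. B \<in> P \<Longrightarrow> block_connected E B" using cov unfolding covering_subforest_def by simp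
  have Pne: "\<And>B. B \<in> P \<Longrightarrow> \<exists>u. u \<in> B" using partition_onD3[OF part] by (metis equals0I)
  have PV: "\<And>B. B \<in> P \<Longrightarrow> B \<subseteq> V" using part unfolding partition_on_def by blast
  have inB: "\<And>v. v \<in> V \<Longrightarrow> \<exists>B\<in>P. v \<in> B" using part unfolding partition_on_def by blast
  have uniq: "\<And>B B' v. B \<in> P \<Longrightarrow> B' \<in> P \<Longrightarrow> v \<in> B \<Longrightarrow> v \<in> B' \<Longrightarrow> B = B'"
    using part unfolding partition_on_def pairwise_def disjnt_def by blast
  define g where "g = gof P \<alpha>"
  define p where "p = pof P \<alpha> \<beta>"
  have gB: "\<And>B v. B \<in> P \<Longrightarrow> v \<in> B \<Longrightarrow> g v = \<alpha> B"
    unfolding g_def gof_def using the_block[OF part] by simp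
  have pdef: "\<And>v. p v = (g v, \<beta> v)" unfolding p_def pof_def g_def by simp
  have edge: "p u < p w \<and> (g u = g w \<longrightarrow> (\<exists>B\<in>P. u \<in> B \<and> w \<in> B))" if uw: "(u,w) \<in> E" for u w
  proof -
    have V: "u \<in> V" "w \<in> V" using uw EV by auto
    obtain Bu Bw where Bu: "Bu \<in> P" "u \<in> Bu" and Bw: "Bw \<in> P" "w \<in> Bw" using inB V by blast
    show ?thesis
    proof (cases "Bu = Bw")
      case True
      then have "(u,w) \<in> sub_edges E P" using uw Bu Bw unfolding sub_edges_def by blast
      then have "(u,w) \<in> (sub_edges E P)\<^sup>+" by (rule r_into_trancl)
      then have "\<beta> u < \<beta> w" using binc V unfolding strict_incr_def by blast
      moreover have "g u = g w" using gB Bu Bw True by simp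
      ultimately show ?thesis using pdef Bu Bw True by auto
    next
      case False
      then have "(Bu,Bw) \<in> quot_edges E P" using uw Bu Bw unfolding quot_edges_def by blast
      then have "(Bu,Bw) \<in> (quot_edges E P)\<^sup>+" by (rule r_into_trancl)
      then have "\<alpha> Bu < \<alpha> Bw" using ainc Bu Bw unfolding strict_incr_def by blast
      then have "g u < g w" using gB Bu Bw by simp
      then show ?thesis using pdef by simp
    qed
  qed
  have cls: "QQ E g `` {v} = B" if B: "B \<in> P" "v \<in> B" for B v
  proof
    show "QQ E g `` {v} \<subseteq> B"
    proof
      fix w assume "w \<in> QQ E g `` {v}"
      then have "(v,w) \<in> QQ E g" by simp
      then show "w \<in> B"
      proof (induction rule: rtrancl_induct)
        case base then show ?case using B by simp
      next
        case (step y z)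
        from step(2) have "((y,z) \<in> E \<or> (z,y) \<in> E) \<and> g y = g z" unfolding RR_def by auto
        then obtain B' where "B' \<in> P" "y \<in> B'" "z \<in> B'" using edge by metis
        then show ?case using uniq[OF B(1) \<open>B' \<in> P\<close> step(3)] by simp
      qed
    qed
    show "B \<subseteq> QQ E g `` {v}"
    proof
      fix w assume w: "w \<in> B"
      have "(v,w) \<in> ((E \<inter> B \<times> B) \<union> (E \<inter> B \<times> B)\<inverse>)\<^sup>*"
        using conn[OF B(1)] B(2) w unfolding block_connected_def by blast
      moreover have "(E \<inter> B \<times> B) \<union> (E \<inter> B \<times> B)\<inverse> \<subseteq> RR E g \<union> (RR E g)\<inverse>"
        using gB[OF B(1)] unfolding RR_def by auto
      ultimately have "(v,w) \<in> QQ E g" using rtrancl_mono by blast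
      then show "w \<in> QQ E g `` {v}" by simp
    qed
  qed
  have compsP: "comps V E g = P"
  proof
    show "comps V E g \<subseteq> P"
    proof
      fix X assume X: "X \<in> comps V E g"
      obtain u where u: "u \<in> X" using partition_onD3[OF part_comps[of V E g]] X by (metis equals0I)
      have "u \<in> V" "X = QQ E g `` {u}" using comps_elem[OF X EV u] by auto
      then obtain B where "B \<in> P" "u \<in> B" using inB by blast
      then show "X \<in> P" using cls \<open>X = QQ E g `` {u}\<close> by simp
    qed
    show "P \<subseteq> comps V E g"
    proof
      fix B assume B: "B \<in> P"
      then obtain u where u: "u \<in> B" using Pne by blast
      then have "u \<in> V" using PV B by blast
      then obtain X where X: "X \<in> comps V E g" "u \<in> X"
        using part_comps[of V E g] unfolding partition_on_def by blast
      then have "X = QQ E g `` {u}" using comps_elem[OF X(1) EV X(2)] by auto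
      then show "B \<in> comps V E g" using cls[OF B u] X by simp
    qed
  qed
  define L where "L = sorted_list_of_set (p ` V)"
  define s where "s = length L"
  have finp: "finite (p ` V)" using fin by simp
  have sL: "sorted_wrt (<) L" unfolding L_def by (rule strict_sorted_list_of_set)
  have dL: "distinct L" using sL by (simp add: strict_sorted_iff)
  have setL: "set L = p ` V" unfolding L_def using finp by simp
  define \<sigma> where "\<sigma> = restrict (\<lambda>v. idx L (p v) + 1) V"
  define \<tau> where "\<tau> = restrict (\<lambda>i. fst (L ! (i - 1))) {1..s}"
  define \<rho> where "\<rho> = restrict (\<lambda>i. snd (L ! (i - 1))) {1..s}"
  have Psi: "PsiF V (P,\<alpha>,\<beta>) = (\<sigma>, \<tau>, \<rho>)"
    unfolding PsiF_def prod.case Let_def \<sigma>_def \<tau>_def \<rho>_def s_def L_def p_def by simp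
  have pL: "\<And>v. v \<in> V \<Longrightarrow> idx L (p v) < s \<and> L ! idx L (p v) = p v"
    using idx_in[OF dL] setL s_def by auto
  have sv: "\<And>v. v \<in> V \<Longrightarrow> \<sigma> v \<in> {1..s}" using pL unfolding \<sigma>_def by (simp add: Suc_leI)
  have ts: "\<And>v. v \<in> V \<Longrightarrow> \<tau> (\<sigma> v) = g v \<and> \<rho> (\<sigma> v) = \<beta> v"
  proof -
    fix v assume v: "v \<in> V"
    have "L ! (\<sigma> v - 1) = p v" using pL[OF v] v unfolding \<sigma>_def by simp
    then show "\<tau> (\<sigma> v) = g v \<and> \<rho> (\<sigma> v) = \<beta> v" using sv[OF v] unfolding \<tau>_def \<rho>_def pdef by simp
  qed
  have imgs: "\<sigma> ` V = {1..s}"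
  proof
    show "\<sigma> ` V \<subseteq> {1..s}" using sv by auto
    show "{1..s} \<subseteq> \<sigma> ` V"
    proof
      fix i assume i: "i \<in> {1..s}"
      then have "L ! (i - 1) \<in> p ` V" using setL s_def by (metis imgL image_eqI)
      then obtain v where v: "v \<in> V" "p v = L ! (i - 1)" by auto
      have "i - 1 < length L" using i s_def by auto
      then have "idx L (p v) = i - 1" using v(2) idx_nth[OF dL] by simp
      then have "\<sigma> v = i" using v(1) i unfolding \<sigma>_def by simp
      then show "i \<in> \<sigma> ` V" using v(1) by blast
    qed
  qed
  have sigsurj: "surj_onto V \<sigma> s" unfolding surj_onto_def using imgs by (auto simp: \<sigma>_def)
  have siginc: "strict_incr V E \<sigma>" unfolding strict_incr_def
  proof (intro ballI impI)
    fix u w assume u: "u \<in> V" and w: "w \<in> V" and uw: "(u,w) \<in> E\<^sup>+"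
    have "p u < p w" using uw by (rule trancl_mono_fun) (use edge in blast)
    then have "idx L (p u) < idx L (p w)" using idx_mono[OF sL] setL u w by blast
    then show "\<sigma> u < \<sigma> w" using u w unfolding \<sigma>_def by simp
  qed
  have imgLs: "(\<lambda>i. L ! (i - 1)) ` {1..s} = p ` V" using imgL setL s_def by metis
  have gV: "g ` V = \<alpha> ` P"
  proof
    show "g ` V \<subseteq> \<alpha> ` P" using inB gB by (metis image_subsetI image_eqI)
    show "\<alpha> ` P \<subseteq> g ` V"
    proof
      fix x assume "x \<in> \<alpha> ` P"
      then obtain B where "B \<in> P" "x = \<alpha> B" by auto
      moreover obtain u where "u \<in> B" using Pne \<open>B \<in> P\<close> by blast
      ultimately show "x \<in> g ` V" using gB PV by (metis image_eqI subsetD)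
    qed
  qed
  have timg: "\<tau> ` {1..s} = {1..r}"
  proof -
    have "\<tau> ` {1..s} = fst ` (\<lambda>i. L ! (i - 1)) ` {1..s}" unfolding \<tau>_def by (auto simp: image_image)
    also have "\<dots> = fst ` p ` V" using imgLs by simp
    also have "\<dots> = g ` V" by (auto simp: image_image pdef)
    finally show ?thesis using gV asurj unfolding surj_onto_def by simp
  qed
  have rimg: "\<rho> ` {1..s} = {1..t}"
  proof -
    have "\<rho> ` {1..s} = snd ` (\<lambda>i. L ! (i - 1)) ` {1..s}" unfolding \<rho>_def by (auto simp: image_image)
    also have "\<dots> = snd ` p ` V" using imgLs by simp
    also have "\<dots> = \<beta> ` V" by (auto simp: image_image pdef)
    finally show ?thesis using bsurj unfolding surj_onto_def by simp
  qed
  have cardL: "card (p ` V) = s" using distinct_card[OF dL] setL s_def by simp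
  have rs: "r \<le> s"
  proof -
    have "card (\<tau> ` {1..s}) \<le> card {1..s}" by (rule card_image_le) simp
    then show ?thesis using timg by simp
  qed
  have tsl: "t \<le> s"
  proof -
    have "card (\<rho> ` {1..s}) \<le> card {1..s}" by (rule card_image_le) simp
    then show ?thesis using rimg by simp
  qed
  have Lless: "L ! (i - 1) < L ! (j - 1)" if "i \<in> {1..s}" "j \<in> {1..s}" "i < j" for i j
    using sL that s_def by (simp add: sorted_wrt_iff_nth_less)
  have tmono: "\<forall>i\<in>{1..s}. \<forall>j\<in>{1..s}. i \<le> j \<longrightarrow> \<tau> i \<le> \<tau> j"
  proof (intro ballI impI)
    fix i j assume ij: "i \<in> {1..s}" "j \<in> {1..s}" "i \<le> j"
    show "\<tau> i \<le> \<tau> j"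
    proof (cases "i = j")
      case False
      then have "L ! (i - 1) < L ! (j - 1)" using Lless ij by simp
      then have "fst (L ! (i - 1)) \<le> fst (L ! (j - 1))"
        by (cases "L ! (i - 1)"; cases "L ! (j - 1)") auto
      then show ?thesis using ij unfolding \<tau>_def by simp
    qed simp
  qed
  have qs: "\<forall>i\<in>{1..s}. \<forall>j\<in>{1..s}. \<tau> i = \<tau> j \<and> i < j \<longrightarrow> \<rho> i < \<rho> j"
  proof (intro ballI impI)
    fix i j assume ij: "i \<in> {1..s}" "j \<in> {1..s}" "\<tau> i = \<tau> j \<and> i < j"
    then have "L ! (i - 1) < L ! (j - 1)" "fst (L ! (i - 1)) = fst (L ! (j - 1))"
      using Lless unfolding \<tau>_def by auto
    then have "snd (L ! (i - 1)) < snd (L ! (j - 1))"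
      by (cases "L ! (i - 1)"; cases "L ! (j - 1)") auto
    then show "\<rho> i < \<rho> j" using ij unfolding \<rho>_def by simp
  qed
  have tsurj: "surj_onto {1..s} \<tau> r" unfolding surj_onto_def using timg by (auto simp: \<tau>_def)
  have rsurj: "surj_onto {1..s} \<rho> t" unfolding surj_onto_def using rimg by (auto simp: \<rho>_def)
  have inA: "(\<sigma>,\<tau>,\<rho>) \<in> setA V E"
    unfolding setA_def mem_Collect_eq case_prod_conv
    apply (rule exI[of _ s], rule exI[of _ r], rule exI[of _ t])
    apply (intro conjI)
    by (fact rs r1 sigsurj siginc tsurj tmono tsl rsurj qs)+
  have cP: "comps V E (\<tau> \<circ> \<sigma>) = P"
    using comps_cong[OF EV, of "\<tau> \<circ> \<sigma>" g] ts compsP by simp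
  have a2: "restrict (\<lambda>B. \<tau> (\<sigma> (SOME v. v \<in> B))) P = \<alpha>"
  proof -
    have "restrict (\<lambda>B. \<tau> (\<sigma> (SOME v. v \<in> B))) P = restrict \<alpha> P"
    proof (rule restrict_ext)
      fix B assume B: "B \<in> P"
      then obtain u where "u \<in> B" using Pne by blast
      then have w: "(SOME v. v \<in> B) \<in> B" by (rule someI)
      then have "(SOME v. v \<in> B) \<in> V" using PV[OF B] by blast
      then have "\<tau> (\<sigma> (SOME v. v \<in> B)) = g (SOME v. v \<in> B)" using ts by blast
      then show "\<tau> (\<sigma> (SOME v. v \<in> B)) = \<alpha> B" using gB[OF B w] by simp
    qed
    then show ?thesis using surj_restrict[OF asurj] by simp
  qed
  have b2: "restrict (\<rho> \<circ> \<sigma>) V = \<beta>"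
  proof -
    have "restrict (\<rho> \<circ> \<sigma>) V = restrict \<beta> V" by (rule restrict_ext) (simp add: ts)
    then show ?thesis using surj_restrict[OF bsurj] by simp
  qed
  have "PhiF V E (\<sigma>,\<tau>,\<rho>) = (P,\<alpha>,\<beta>)" unfolding PhiF_def prod.case cP a2 b2 ..
  then show ?thesis using Psi inA by simp
qed


theorem lemma5p2:
  fixes V :: "'v set" and E :: "('v \<times> 'v) set" and d :: "'v \<Rightarrow> 'o::ab_semigroup_add"
  assumes "rforest V E" and "V \<noteq> {}"
  shows "\<exists>\<Phi>. bij_betw \<Phi> (setA V E) (setB V E) \<and>
    (\<forall>\<sigma> \<tau> \<rho> P \<alpha> \<beta>. (\<sigma>, \<tau>, \<rho>) \<in> setA V E \<and> \<Phi> (\<sigma>, \<tau>, \<rho>) = (P, \<alpha>, \<beta>) \<longrightarrow>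
       word V d (\<tau> \<circ> \<sigma>) = word P (osum d) \<alpha> \<and>
       word V d (\<rho> \<circ> \<sigma>) = word V d \<beta>)"
proof -
  have EV: "E \<subseteq> V \<times> V" and fin: "finite V" using assms(1) unfolding rforest_def by auto
  have bij: "bij_betw (PhiF V E) (setA V E) (setB V E)"
  proof (rule bij_betw_byWitness[where f' = "PsiF V"])
    show "\<forall>a\<in>setA V E. PsiF V (PhiF V E a) = a"
      using PsiPhi[OF EV] by (metis prod_cases3)
    show "\<forall>b\<in>setB V E. PhiF V E (PsiF V b) = b"
      using PsiF_props[OF EV fin] by (metis prod_cases3)
    show "PhiF V E ` setA V E \<subseteq> setB V E"
      using PhiF_B[OF EV] by (metis image_subsetI prod_cases3)
    show "PsiF V ` setB V E \<subseteq> setA V E"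
      using PsiF_props[OF EV fin] by (metis image_subsetI prod_cases3)
  qed
  show ?thesis
    using bij PhiF_words[OF EV fin] by blast
qed

end
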